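(* Let $q>0$. Let $I=(i_1,\dots,i_k)$ and $I'=(i'_1,\dots,i'_\ell)$ be two increasing sequences of positive integers with $i_k<i'_1$, and let $\pi\sim\mu_{n,q}$ for some $n\ge i'_\ell$. Then $\pi_I$ and $\pi_{I'}$ are independent.
   Context: For $q>0$ and $n\ge1$, $\mu_{n,q}(\pi)=q^{\mathrm{inv}(\pi)}/Z_{n,q}$ on $S_n$, with $\mathrm{inv}(\pi)$ the number of pairs $i<j$ with $\pi(i)>\pi(j)$ and $Z_{n,q}$ a normalizing constant. For a permutation $\pi$ and an increasing sequence of indices $I=(i_1,\dots,i_k)$, $\pi_I\in S_k$ denotes the induced relative ordering: $\pi_I(j)>\pi_I(j')$ if and only if $\pi(i_j)>\pi(i_{j'})$. *)

theory Defs
  imports "HOL-Combinatorics.Combinatorics"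
begin

definition Sn :: "nat \<Rightarrow> (nat \<Rightarrow> nat) set" where
  "Sn n = {p. p permutes {1..n}}"

definition inv_count :: "nat \<Rightarrow> (nat \<Rightarrow> nat) \<Rightarrow> nat" where
  "inv_count n p = card {(i, j). i \<in> {1..n} \<and> j \<in> {1..n} \<and> i < j \<and> p i > p j}"

definition Z :: "nat \<Rightarrow> real \<Rightarrow> real" where
  "Z n q = (\<Sum>p\<in>Sn n. q ^ inv_count n p)"

definition mallows :: "nat \<Rightarrow> real \<Rightarrow> (nat \<Rightarrow> nat) \<Rightarrow> real" where
  "mallows n q p = q ^ inv_count n p / Z n q"

definition mallows_prob :: "nat \<Rightarrow> real \<Rightarrow> ((nat \<Rightarrow> nat) \<Rightarrow> bool) \<Rightarrow> real" where
  "mallows_prob n q A = (\<Sum>p\<in>{p\<in>Sn n. A p}. mallows n q p)"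

definition pattern :: "(nat \<Rightarrow> nat) \<Rightarrow> nat list \<Rightarrow> (nat \<Rightarrow> nat)" where
  "pattern p I = (\<lambda>j. if j \<in> {1..length I}
      then card {j' \<in> {1..length I}. p (I ! (j' - 1)) \<le> p (I ! (j - 1))}
      else j)"

end

theory Submission imports Defs begin

definition rk :: "(nat \<Rightarrow> nat) \<Rightarrow> nat \<Rightarrow> nat \<Rightarrow> nat \<Rightarrow> nat" where
  "rk p a b i = (if i \<in> {a..b} then a + card {k\<in>{a..b}. p k < p i} else i)"

lemma rk_less:
  assumes "i \<in> {a..b}" "j \<in> {a..b}"
  shows "rk p a b i < rk p a b j \<longleftrightarrow> p i < p j"
proof
  assume h: "p i < p j"
  have "{k\<in>{a..b}. p k < p i} \<subset> {k\<in>{a..b}. p k < p j}"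
    using h assms by auto
  hence "card {k\<in>{a..b}. p k < p i} < card {k\<in>{a..b}. p k < p j}"
    by (intro psubset_card_mono) auto
  thus "rk p a b i < rk p a b j" using assms by (simp add: rk_def)
next
  assume h: "rk p a b i < rk p a b j"
  show "p i < p j"
  proof (rule ccontr)
    assume "\<not> p i < p j"
    hence "{k\<in>{a..b}. p k < p j} \<subseteq> {k\<in>{a..b}. p k < p i}" by auto
    hence "card {k\<in>{a..b}. p k < p j} \<le> card {k\<in>{a..b}. p k < p i}"
      by (intro card_mono) auto
    thus False using h assms by (simp add: rk_def)
  qed
qed

lemma rk_permutes:
  assumes inj: "inj_on p {a..b}"
  shows "rk p a b permutes {a..b}"
proof (rule bij_imp_permutes)
  have sub: "rk p a b ` {a..b} \<subseteq> {a..b}"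
  proof
    fix x assume "x \<in> rk p a b ` {a..b}"
    then obtain i where i: "i \<in> {a..b}" "x = rk p a b i" by auto
    have "{k\<in>{a..b}. p k < p i} \<subseteq> {a..b} - {i}" by auto
    hence "card {k\<in>{a..b}. p k < p i} \<le> card ({a..b} - {i})" by (intro card_mono) auto
    also have "\<dots> = b - a" using i by simp
    finally show "x \<in> {a..b}" using i by (auto simp: rk_def)
  qed
  have injr: "inj_on (rk p a b) {a..b}"
  proof (rule inj_onI)
    fix i j assume ij: "i \<in> {a..b}" "j \<in> {a..b}" "rk p a b i = rk p a b j"
    show "i = j"
    proof (rule ccontr)
      assume "i \<noteq> j"
      hence "p i \<noteq> p j" using inj ij by (auto dest: inj_onD)
      hence "p i < p j \<or> p j < p i" by auto
      thus False using rk_less[of i a b j p] rk_less[of j a b i p] ij by auto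
    qed
  qed
  have "rk p a b ` {a..b} = {a..b}" using endo_inj_surj[OF _ sub injr] by simp
  thus "bij_betw (rk p a b) {a..b} {a..b}" using injr by (simp add: bij_betw_def)
  show "\<And>x. x \<notin> {a..b} \<Longrightarrow> rk p a b x = x" unfolding rk_def by (rule if_not_P)
qed

lemma rk_eq:
  assumes al: "\<alpha> permutes {a..b}"
    and ord: "\<forall>i\<in>{a..b}. \<forall>j\<in>{a..b}. p i < p j \<longleftrightarrow> \<alpha> i < \<alpha> j"
  shows "rk p a b = \<alpha>"
proof
  fix i
  show "rk p a b i = \<alpha> i"
  proof (cases "i \<in> {a..b}")
    case False thus ?thesis using permutes_not_in[OF al False] by (simp only: rk_def if_False)
  next
    case True
    have ai: "\<alpha> i \<in> {a..b}" using True permutes_in_image[OF al] by simp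
    have "{k\<in>{a..b}. p k < p i} = {k\<in>{a..b}. \<alpha> k < \<alpha> i}" using ord True by auto
    moreover have "\<alpha> ` {k\<in>{a..b}. \<alpha> k < \<alpha> i} = {a..<\<alpha> i}"
    proof -
      have "\<alpha> ` {k\<in>{a..b}. \<alpha> k < \<alpha> i} = {v\<in>{a..b}. v < \<alpha> i}"
      proof (intro equalityI subsetI)
        fix v assume "v \<in> \<alpha> ` {k\<in>{a..b}. \<alpha> k < \<alpha> i}"
        thus "v \<in> {v\<in>{a..b}. v < \<alpha> i}" using permutes_in_image[OF al] by auto
      next
        fix v assume v: "v \<in> {v\<in>{a..b}. v < \<alpha> i}"
        then obtain k where "k\<in>{a..b}" "v = \<alpha> k" using permutes_image[OF al]
          by (metis (no_types, lifting) imageE mem_Collect_eq)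
        thus "v \<in> \<alpha> ` {k\<in>{a..b}. \<alpha> k < \<alpha> i}" using v by auto
      qed
      also have "\<dots> = {a..<\<alpha> i}" using ai by auto
      finally show ?thesis .
    qed
    moreover have "inj_on \<alpha> {k\<in>{a..b}. \<alpha> k < \<alpha> i}" using permutes_inj_on[OF al] .
    ultimately have "card {k\<in>{a..b}. p k < p i} = \<alpha> i - a"
      by (metis card_atLeastLessThan card_image)
    thus ?thesis using True ai by (simp add: rk_def)
  qed
qed

definition invs :: "(nat \<Rightarrow> nat) \<Rightarrow> nat set \<Rightarrow> nat set \<Rightarrow> nat" where
  "invs p X Y = (\<Sum>i\<in>X. \<Sum>j\<in>Y. if i < j \<and> p j < p i then 1 else 0)"

lemma inv_count_invs: "inv_count n p = invs p {1..n} {1..n}"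
proof -
  have "{(i, j). i \<in> {1..n} \<and> j \<in> {1..n} \<and> i < j \<and> p i > p j}
      = {x \<in> {1..n} \<times> {1..n}. case x of (i, j) \<Rightarrow> i < j \<and> p j < p i}" by auto
  hence "inv_count n p = (\<Sum>x\<in>{x \<in> {1..n} \<times> {1..n}. case x of (i, j) \<Rightarrow> i < j \<and> p j < p i}. 1)"
    by (simp add: inv_count_def)
  also have "\<dots> = (\<Sum>x\<in>{1..n} \<times> {1..n}. if (case x of (i, j) \<Rightarrow> i < j \<and> p j < p i) then 1 else 0)"
    by (rule sum.inter_filter) simp
  also have "\<dots> = invs p {1..n} {1..n}"
    unfolding invs_def sum.cartesian_product by (rule sum.cong) (auto split: prod.splits)
  finally show ?thesis .
qed

lemma invs_unionL: "finite X1 \<Longrightarrow> finite X2 \<Longrightarrow> X1 \<inter> X2 = {} \<Longrightarrow>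
   invs p (X1 \<union> X2) Y = invs p X1 Y + invs p X2 Y"
  unfolding invs_def by (rule sum.union_disjoint)

lemma invs_unionR: "finite Y1 \<Longrightarrow> finite Y2 \<Longrightarrow> Y1 \<inter> Y2 = {} \<Longrightarrow>
   invs p X (Y1 \<union> Y2) = invs p X Y1 + invs p X Y2"
  unfolding invs_def by (simp add: sum.union_disjoint sum.distrib)

lemma invs_zero: "(\<And>i j. i \<in> X \<Longrightarrow> j \<in> Y \<Longrightarrow> i < j \<Longrightarrow> p i < p j) \<Longrightarrow> invs p X Y = 0"
  unfolding invs_def by (intro sum.neutral ballI) (auto dest: less_asym)

lemma invs_cong: "(\<And>i j. i \<in> X \<Longrightarrow> j \<in> Y \<Longrightarrow> i < j \<Longrightarrow> p j < p i \<longleftrightarrow> p' j < p' i) \<Longrightarrow> invs p X Y = invs p' X Y"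
  unfolding invs_def by (intro sum.cong refl) auto

lemma pattern_cong: "(\<And>x y. x \<in> set I \<Longrightarrow> y \<in> set I \<Longrightarrow> p x \<le> p y \<longleftrightarrow> p' x \<le> p' y) \<Longrightarrow>
  pattern p I = pattern p' I"
  unfolding pattern_def
proof (intro ext if_cong refl arg_cong[where f=card] Collect_cong conj_cong)
  fix j x assume h: "\<And>x y. x \<in> set I \<Longrightarrow> y \<in> set I \<Longrightarrow> p x \<le> p y \<longleftrightarrow> p' x \<le> p' y"
    "j \<in> {1..length I}" "x \<in> {1..length I}"
  show "p (I ! (x - 1)) \<le> p (I ! (j - 1)) \<longleftrightarrow> p' (I ! (x - 1)) \<le> p' (I ! (j - 1))"
    using h by (intro h(1)) auto
qed

context
  fixes m n :: nat
  assumes mn: "m \<le> n"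
begin

definition "Rs = {r \<in> Sn n. (\<forall>x\<in>{1..m}. \<forall>y\<in>{1..m}. x < y \<longrightarrow> r x < r y)
                     \<and> (\<forall>x\<in>{Suc m..n}. \<forall>y\<in>{Suc m..n}. x < y \<longrightarrow> r x < r y)}"
definition "As = {a. a permutes {1..m}}"
definition "Bs = {b. b permutes {Suc m..n}}"

definition Phi :: "(nat \<Rightarrow> nat) \<times> (nat \<Rightarrow> nat) \<times> (nat \<Rightarrow> nat) \<Rightarrow> (nat \<Rightarrow> nat)" where
  "Phi x = (case x of (r, a, b) \<Rightarrow> r \<circ> a \<circ> b)"

definition Psi :: "(nat \<Rightarrow> nat) \<Rightarrow> (nat \<Rightarrow> nat) \<times> (nat \<Rightarrow> nat) \<times> (nat \<Rightarrow> nat)" where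
  "Psi p = (p \<circ> inv (rk p 1 m \<circ> rk p (Suc m) n), rk p 1 m, rk p (Suc m) n)"

lemma LU: "{1..n} = {1..m} \<union> {Suc m..n}" "{1..m} \<inter> {Suc m..n} = {}"
  using mn by auto

lemma compL: "a permutes {1..m} \<Longrightarrow> b permutes {Suc m..n} \<Longrightarrow> x \<in> {1..m} \<Longrightarrow> (r \<circ> a \<circ> b) x = r (a x)"
  by (simp add: permutes_not_in)

lemma compU: "a permutes {1..m} \<Longrightarrow> b permutes {Suc m..n} \<Longrightarrow> x \<in> {Suc m..n} \<Longrightarrow> (r \<circ> a \<circ> b) x = r (b x)"
proof -
  assume a: "a permutes {1..m}" and b: "b permutes {Suc m..n}" and x: "x \<in> {Suc m..n}"
  have "b x \<in> {Suc m..n}" using permutes_in_image[OF b] x by simp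
  hence "b x \<notin> {1..m}" by auto
  thus ?thesis using permutes_not_in[OF a] by simp
qed

lemma ab_permutes: "a permutes {1..m} \<Longrightarrow> b permutes {Suc m..n} \<Longrightarrow> a \<circ> b permutes {1..n}"
  by (rule permutes_compose) (use mn in \<open>auto intro: permutes_subset\<close>)

lemma ab_image: "a permutes {1..m} \<Longrightarrow> b permutes {Suc m..n} \<Longrightarrow> x \<in> {1..m} \<Longrightarrow> \<exists>i\<in>{1..m}. (a \<circ> b) i = x"
proof -
  assume a: "a permutes {1..m}" and b: "b permutes {Suc m..n}" and x: "x \<in> {1..m}"
  obtain i where i: "i \<in> {1..m}" "a i = x" using permutes_image[OF a] x by (metis imageE)
  have "b i = i" using permutes_not_in[OF b] i by auto
  thus ?thesis using i by (intro bexI[of _ i]) auto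
qed

lemma ab_imageU: "a permutes {1..m} \<Longrightarrow> b permutes {Suc m..n} \<Longrightarrow> x \<in> {Suc m..n} \<Longrightarrow> \<exists>i\<in>{Suc m..n}. (a \<circ> b) i = x"
proof -
  assume a: "a permutes {1..m}" and b: "b permutes {Suc m..n}" and x: "x \<in> {Suc m..n}"
  obtain i where i: "i \<in> {Suc m..n}" "b i = x" using permutes_image[OF b] x by (metis imageE)
  have "a x = x" using permutes_not_in[OF a] x by auto
  thus ?thesis using i by (intro bexI[of _ i]) auto
qed

lemma bij_Phi: "bij_betw Phi (Rs \<times> As \<times> Bs) (Sn n)"
proof (rule bij_betw_byWitness[where f'=Psi])
  show "\<forall>x\<in>Rs \<times> As \<times> Bs. Psi (Phi x) = x"
  proof
    fix x assume "x \<in> Rs \<times> As \<times> Bs"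
    then obtain r a b where x: "x = (r, a, b)" and r: "r \<in> Rs" and a: "a permutes {1..m}"
      and b: "b permutes {Suc m..n}" by (auto simp: As_def Bs_def)
    have ra: "rk (r \<circ> a \<circ> b) 1 m = a"
    proof (rule rk_eq[OF a], intro ballI)
      fix i j assume ij: "i \<in> {1..m}" "j \<in> {1..m}"
      have "a i \<in> {1..m}" "a j \<in> {1..m}" using ij permutes_in_image[OF a] by auto
      hence "r (a i) < r (a j) \<longleftrightarrow> a i < a j" using r unfolding Rs_def
        by (metis (no_types, lifting) mem_Collect_eq linorder_neq_iff less_asym)
      thus "(r \<circ> a \<circ> b) i < (r \<circ> a \<circ> b) j \<longleftrightarrow> a i < a j" using compL[OF a b ij(1), of r] compL[OF a b ij(2), of r] by simp
    qed
    have rb: "rk (r \<circ> a \<circ> b) (Suc m) n = b"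
    proof (rule rk_eq[OF b], intro ballI)
      fix i j assume ij: "i \<in> {Suc m..n}" "j \<in> {Suc m..n}"
      have "b i \<in> {Suc m..n}" "b j \<in> {Suc m..n}" using ij permutes_in_image[OF b] by auto
      hence "r (b i) < r (b j) \<longleftrightarrow> b i < b j" using r unfolding Rs_def
        by (metis (no_types, lifting) mem_Collect_eq linorder_neq_iff less_asym)
      thus "(r \<circ> a \<circ> b) i < (r \<circ> a \<circ> b) j \<longleftrightarrow> b i < b j" using compU[OF a b ij(1), of r] compU[OF a b ij(2), of r] by simp
    qed
    have "r \<circ> a \<circ> b \<circ> inv (a \<circ> b) = r"
      using permutes_inv_o(1)[OF ab_permutes[OF a b]] by (simp add: o_assoc[symmetric])
    thus "Psi (Phi x) = x" using ra rb by (simp add: x Phi_def Psi_def)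
  qed
  show "\<forall>p\<in>Sn n. Phi (Psi p) = p"
  proof
    fix p assume p: "p \<in> Sn n"
    have inj: "inj_on p X" for X using p permutes_inj_on by (auto simp: Sn_def)
    have g: "rk p 1 m \<circ> rk p (Suc m) n permutes {1..n}"
      by (rule ab_permutes) (auto intro: rk_permutes inj)
    hence "p \<circ> (inv (rk p 1 m \<circ> rk p (Suc m) n) \<circ> (rk p 1 m \<circ> rk p (Suc m) n)) = p"
      unfolding permutes_inv_o(2)[OF g] by simp
    thus "Phi (Psi p) = p" by (simp add: Phi_def Psi_def o_assoc)
  qed
  show "Phi ` (Rs \<times> As \<times> Bs) \<subseteq> Sn n"
  proof
    fix y assume "y \<in> Phi ` (Rs \<times> As \<times> Bs)"
    then obtain r a b where y: "y = r \<circ> a \<circ> b" and r: "r \<in> Rs" and a: "a permutes {1..m}"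
      and b: "b permutes {Suc m..n}" by (auto simp: As_def Bs_def Phi_def)
    have "r \<circ> (a \<circ> b) permutes {1..n}" using permutes_compose[OF ab_permutes[OF a b], of r] r
      by (auto simp: Rs_def Sn_def)
    thus "y \<in> Sn n" by (simp add: y Sn_def o_assoc)
  qed
  show "Psi ` Sn n \<subseteq> Rs \<times> As \<times> Bs"
  proof
    fix y assume "y \<in> Psi ` Sn n"
    then obtain p where y: "y = Psi p" and p: "p permutes {1..n}" by (auto simp: Sn_def)
    have inj: "inj_on p X" for X using p permutes_inj_on by auto
    define a where "a = rk p 1 m"
    define b where "b = rk p (Suc m) n"
    have a: "a permutes {1..m}" unfolding a_def by (rule rk_permutes[OF inj])
    have b: "b permutes {Suc m..n}" unfolding b_def by (rule rk_permutes[OF inj])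
    have g: "a \<circ> b permutes {1..n}" by (rule ab_permutes[OF a b])
    have ginv: "inv (a \<circ> b) ((a \<circ> b) i) = i" for i using permutes_inverses(2)[OF g] .
    have r1: "p \<circ> inv (a \<circ> b) permutes {1..n}" by (rule permutes_compose[OF permutes_inv[OF g] p])
    have r2: "(p \<circ> inv (a \<circ> b)) x < (p \<circ> inv (a \<circ> b)) y'"
      if xy: "x \<in> {1..m}" "y' \<in> {1..m}" "x < y'" for x y'
    proof -
      obtain i where i: "i \<in> {1..m}" "(a \<circ> b) i = x" using ab_image[OF a b xy(1)] by blast
      obtain j where j: "j \<in> {1..m}" "(a \<circ> b) j = y'" using ab_image[OF a b xy(2)] by blast
      have bi: "b i = i" "b j = j" using permutes_not_in[OF b] i j by auto
      have "a i < a j" using i j bi xy by simp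
      hence "p i < p j" using rk_less[of i 1 m j p] i j by (simp add: a_def)
      thus ?thesis using i j ginv by (metis comp_apply)
    qed
    have r3: "(p \<circ> inv (a \<circ> b)) x < (p \<circ> inv (a \<circ> b)) y'"
      if xy: "x \<in> {Suc m..n}" "y' \<in> {Suc m..n}" "x < y'" for x y'
    proof -
      obtain i where i: "i \<in> {Suc m..n}" "(a \<circ> b) i = x" using ab_imageU[OF a b xy(1)] by blast
      obtain j where j: "j \<in> {Suc m..n}" "(a \<circ> b) j = y'" using ab_imageU[OF a b xy(2)] by blast
      have "(a \<circ> b) i = b i" "(a \<circ> b) j = b j" using compU[OF a b, of _ id] i j by auto
      hence "b i < b j" using i j xy by simp
      hence "p i < p j" using rk_less[of i "Suc m" n j p] i j by (simp add: b_def)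
      thus ?thesis using i j ginv by (metis comp_apply)
    qed
    have y': "y = (p \<circ> inv (a \<circ> b), a, b)" by (simp add: y Psi_def a_def b_def)
    show "y \<in> Rs \<times> As \<times> Bs" unfolding y' Rs_def Sn_def As_def Bs_def
      using r1 r2 r3 a b by blast
  qed
qed


lemma smono_less:
  assumes "\<forall>x\<in>S. \<forall>y\<in>S. x < y \<longrightarrow> r x < (r y::nat)" "x \<in> S" "(y::nat) \<in> S"
  shows "r x < r y \<longleftrightarrow> x < y"
proof
  assume h: "r x < r y"
  show "x < y"
  proof (rule ccontr)
    assume "\<not> x < y"
    hence "y < x \<or> y = x" by auto
    thus False using assms h by (metis less_asym less_irrefl)
  qed
next
  assume "x < y" thus "r x < r y" using assms by auto
qed

lemma smono_iff:
  assumes "\<forall>x\<in>S. \<forall>y\<in>S. x < y \<longrightarrow> r x < (r y::nat)" "x \<in> S" "(y::nat) \<in> S"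
  shows "r x \<le> r y \<longleftrightarrow> x \<le> y" "r x < r y \<longleftrightarrow> x < y"
  using smono_less[OF assms(1,3,2)] smono_less[OF assms] by (simp_all add: not_less[symmetric])

lemma inv_split: "inv_count n p = invs p {1..m} {1..m} + invs p {1..m} {Suc m..n}
   + invs p {Suc m..n} {Suc m..n}"
proof -
  have z: "invs p {Suc m..n} {Suc 0..m} = 0" by (rule invs_zero) auto
  show ?thesis unfolding inv_count_invs LU(1)
    by (simp add: invs_unionL invs_unionR LU(2) z Int_commute)
qed

lemma inv_Phi:
  assumes r: "r \<in> Rs" and a: "a permutes {1..m}" and b: "b permutes {Suc m..n}"
  shows "inv_count n (r \<circ> a \<circ> b) = inv_count n r + invs a {1..m} {1..m} + invs b {Suc m..n} {Suc m..n}"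
proof -
  let ?p = "r \<circ> a \<circ> b"
  have rL: "\<forall>x\<in>{1..m}. \<forall>y\<in>{1..m}. x < y \<longrightarrow> r x < r y"
   and rU: "\<forall>x\<in>{Suc m..n}. \<forall>y\<in>{Suc m..n}. x < y \<longrightarrow> r x < r y" using r by (auto simp: Rs_def)
  have aL: "a x \<in> {1..m}" if "x \<in> {1..m}" for x using permutes_in_image[OF a] that by simp
  have bU: "b x \<in> {Suc m..n}" if "x \<in> {Suc m..n}" for x using permutes_in_image[OF b] that by simp
  have bL: "b x = x" if "x \<in> {1..m}" for x using permutes_not_in[OF b] that by auto
  have aU: "a (b x) = b x" if "x \<in> {Suc m..n}" for x using permutes_not_in[OF a] bU[OF that] by auto
  have 1: "invs ?p {1..m} {1..m} = invs a {1..m} {1..m}"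
  proof (rule invs_cong)
    fix i j assume ij: "i \<in> {1..m}" "j \<in> {1..m}"
    show "?p j < ?p i \<longleftrightarrow> a j < a i" using bL[OF ij(1)] bL[OF ij(2)] smono_iff(2)[OF rL aL[OF ij(2)] aL[OF ij(1)]] by simp
  qed
  have 2: "invs ?p {Suc m..n} {Suc m..n} = invs b {Suc m..n} {Suc m..n}"
  proof (rule invs_cong)
    fix i j assume ij: "i \<in> {Suc m..n}" "j \<in> {Suc m..n}"
    show "?p j < ?p i \<longleftrightarrow> b j < b i" using aU[OF ij(1)] aU[OF ij(2)] smono_iff(2)[OF rU bU[OF ij(2)] bU[OF ij(1)]] by simp
  qed
  have 3: "invs ?p {1..m} {Suc m..n} = invs r {1..m} {Suc m..n}"
  proof -
    have "invs ?p {1..m} {Suc m..n} = (\<Sum>i\<in>{1..m}. \<Sum>j\<in>{Suc m..n}. if r (b j) < r (a i) then 1 else 0)"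
      unfolding invs_def by (intro sum.cong refl) (auto simp: bL aU bL aU)
    also have "\<dots> = (\<Sum>i\<in>{1..m}. \<Sum>j\<in>{Suc m..n}. if r j < r (a i) then 1 else 0)"
      by (intro sum.cong refl sum.reindex_bij_betw permutes_imp_bij[OF b])
    also have "\<dots> = (\<Sum>i\<in>{1..m}. \<Sum>j\<in>{Suc m..n}. if r j < r i then 1 else 0)"
      by (rule sum.reindex_bij_betw[OF permutes_imp_bij[OF a], where g="\<lambda>i. \<Sum>j\<in>{Suc m..n}. if r j < r i then 1 else 0"])
    also have "\<dots> = invs r {1..m} {Suc m..n}"
      unfolding invs_def by (intro sum.cong refl) auto
    finally show ?thesis .
  qed
  have 4: "invs r {1..m} {1..m} = 0" by (rule invs_zero) (use rL in auto)
  have 5: "invs r {Suc m..n} {Suc m..n} = 0" by (rule invs_zero) (use rU in auto)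
  show ?thesis using inv_split[of ?p] inv_split[of r] 1 2 3 4 5 by simp
qed

lemma sum_prod3: "(\<Sum>x\<in>A \<times> B \<times> C. (F (fst x) :: real) * G (fst (snd x)) * H (snd (snd x)))
   = sum F A * sum G B * sum H C"
proof -
  have "sum F A * sum G B * sum H C = (\<Sum>a\<in>A. \<Sum>b\<in>B. \<Sum>c\<in>C. F a * (G b * H c))"
    unfolding sum_product unfolding sum_distrib_right unfolding sum_distrib_left by (simp add: mult.assoc, rule sum.cong[OF refl], rule sum.swap)
  thus ?thesis by (simp add: sum.cartesian_product' mult.assoc)
qed

lemma factor:
  assumes I: "set I \<subseteq> {1..m}" and I': "set I' \<subseteq> {Suc m..n}"
  shows "(\<Sum>p\<in>Sn n. (q::real) ^ inv_count n p * f (pattern p I) * g (pattern p I'))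
    = (\<Sum>r\<in>Rs. q ^ inv_count n r) * (\<Sum>a\<in>As. q ^ invs a {1..m} {1..m} * f (pattern a I))
      * (\<Sum>b\<in>Bs. q ^ invs b {Suc m..n} {Suc m..n} * g (pattern b I'))"
proof -
  have "(\<Sum>p\<in>Sn n. q ^ inv_count n p * f (pattern p I) * g (pattern p I'))
     = (\<Sum>x\<in>Rs \<times> As \<times> Bs. q ^ inv_count n (Phi x) * f (pattern (Phi x) I) * g (pattern (Phi x) I'))"
    by (rule sum.reindex_bij_betw[OF bij_Phi, symmetric])
  also have "\<dots> = (\<Sum>x\<in>Rs \<times> As \<times> Bs. q ^ inv_count n (fst x)
      * (q ^ invs (fst (snd x)) {1..m} {1..m} * f (pattern (fst (snd x)) I))
      * (q ^ invs (snd (snd x)) {Suc m..n} {Suc m..n} * g (pattern (snd (snd x)) I')))"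
  proof (rule sum.cong[OF refl])
    fix x assume "x \<in> Rs \<times> As \<times> Bs"
    then obtain r a b where x: "x = (r, a, b)" and r: "r \<in> Rs" and a: "a permutes {1..m}"
      and b: "b permutes {Suc m..n}" by (auto simp: As_def Bs_def)
    have rL: "\<forall>x\<in>{1..m}. \<forall>y\<in>{1..m}. x < y \<longrightarrow> r x < r y"
     and rU: "\<forall>x\<in>{Suc m..n}. \<forall>y\<in>{Suc m..n}. x < y \<longrightarrow> r x < r y" using r by (auto simp: Rs_def)
    have aL: "a x \<in> {1..m}" if "x \<in> {1..m}" for x using permutes_in_image[OF a] that by simp
    have bU: "b x \<in> {Suc m..n}" if "x \<in> {Suc m..n}" for x using permutes_in_image[OF b] that by simp
  have bL: "b x = x" if "x \<in> {1..m}" for x using permutes_not_in[OF b] that by auto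
  have aU: "a (b x) = b x" if "x \<in> {Suc m..n}" for x using permutes_not_in[OF a] bU[OF that] by auto
    have pa: "pattern (r \<circ> a \<circ> b) I = pattern a I"
    proof (rule pattern_cong)
      fix i j assume "i \<in> set I" "j \<in> set I"
      hence ij: "i \<in> {1..m}" "j \<in> {1..m}" using I by auto
      show "(r \<circ> a \<circ> b) i \<le> (r \<circ> a \<circ> b) j \<longleftrightarrow> a i \<le> a j" using bL[OF ij(1)] bL[OF ij(2)] smono_iff(1)[OF rL aL[OF ij(1)] aL[OF ij(2)]] by simp
    qed
    have pb: "pattern (r \<circ> a \<circ> b) I' = pattern b I'"
    proof (rule pattern_cong)
      fix i j assume "i \<in> set I'" "j \<in> set I'"
      hence ij: "i \<in> {Suc m..n}" "j \<in> {Suc m..n}" using I' by auto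
      show "(r \<circ> a \<circ> b) i \<le> (r \<circ> a \<circ> b) j \<longleftrightarrow> b i \<le> b j" using aU[OF ij(1)] aU[OF ij(2)] smono_iff(1)[OF rU bU[OF ij(1)] bU[OF ij(2)]] by simp
    qed
    show "q ^ inv_count n (Phi x) * f (pattern (Phi x) I) * g (pattern (Phi x) I') =
      q ^ inv_count n (fst x) * (q ^ invs (fst (snd x)) {1..m} {1..m} * f (pattern (fst (snd x)) I))
      * (q ^ invs (snd (snd x)) {Suc m..n} {Suc m..n} * g (pattern (snd (snd x)) I'))"
      by (simp add: x Phi_def pa pb inv_Phi[OF r a b] power_add)
  qed
  also have "\<dots> = (\<Sum>r\<in>Rs. q ^ inv_count n r) * (\<Sum>a\<in>As. q ^ invs a {1..m} {1..m} * f (pattern a I))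
      * (\<Sum>b\<in>Bs. q ^ invs b {Suc m..n} {Suc m..n} * g (pattern b I'))"
    by (rule sum_prod3)
  finally show ?thesis .
qed
end


lemma sorted_le_last: "sorted_wrt (<) (xs::nat list) \<Longrightarrow> x \<in> set xs \<Longrightarrow> x \<le> last xs"
  by (induction xs) (auto simp: less_imp_le)

lemma sorted_hd_le: "sorted_wrt (<) (xs::nat list) \<Longrightarrow> x \<in> set xs \<Longrightarrow> hd xs \<le> x"
  by (induction xs) (auto simp: less_imp_le)

theorem lemma2p5:
  fixes q :: real and n :: nat and I I' :: "nat list"
  assumes "q > 0"
    and "I \<noteq> []" and "I' \<noteq> []"
    and "sorted_wrt (<) I" and "sorted_wrt (<) I'"
    and "\<forall>i\<in>set I. i \<ge> 1" and "\<forall>i\<in>set I'. i \<ge> 1"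
    and "last I < hd I'"
    and "n \<ge> last I'"
  shows "\<forall>\<sigma> \<tau>. mallows_prob n q (\<lambda>p. pattern p I = \<sigma> \<and> pattern p I' = \<tau>)
              = mallows_prob n q (\<lambda>p. pattern p I = \<sigma>) * mallows_prob n q (\<lambda>p. pattern p I' = \<tau>)"
proof (intro allI)
  fix \<sigma> \<tau> :: "nat \<Rightarrow> nat"
  define m where "m = last I"
  have Iset: "set I \<subseteq> {1..m}" using assms(6) sorted_le_last[OF assms(4)] by (auto simp: m_def)
  have I'set: "set I' \<subseteq> {Suc m..n}"
  proof
    fix x assume x: "x \<in> set I'"
    have "hd I' \<le> x" "x \<le> last I'" using sorted_le_last[OF assms(5) x] sorted_hd_le[OF assms(5) x] by auto
    thus "x \<in> {Suc m..n}" using assms(8,9) unfolding m_def by auto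
  qed
  have mn: "m \<le> n" using assms(3,8,9) sorted_hd_le[OF assms(5)] unfolding m_def
    by (metis last_in_set le_trans less_imp_le)
  have fin: "finite (Sn n)" by (simp add: Sn_def finite_permutations)
  define M where "M f g = (\<Sum>p\<in>Sn n. q ^ inv_count n p * f (pattern p I) * g (pattern p I'))"
    for f g :: "(nat \<Rightarrow> nat) \<Rightarrow> real"
  have mp: "mallows_prob n q (\<lambda>p. E (pattern p I) \<and> F (pattern p I')) =
     M (\<lambda>s. if E s then 1 else 0) (\<lambda>s. if F s then 1 else 0) / Z n q" for E F
    unfolding mallows_prob_def mallows_def M_def sum_divide_distrib[symmetric]
    by (subst sum.inter_filter[OF fin]) (auto intro!: sum.cong)
  have Zm: "Z n q = M (\<lambda>_. 1) (\<lambda>_. 1)" by (simp add: Z_def M_def)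
  define C where "C = (\<Sum>r\<in>Rs m n. q ^ inv_count n r)"
  define A where "A f = (\<Sum>a\<in>As m. q ^ invs a {1..m} {1..m} * f (pattern a I))" for f :: "(nat \<Rightarrow> nat) \<Rightarrow> real"
  define B where "B g = (\<Sum>b\<in>Bs m n. q ^ invs b {Suc m..n} {Suc m..n} * g (pattern b I'))" for g :: "(nat \<Rightarrow> nat) \<Rightarrow> real"
  have Mf: "M f g = C * A f * B g" for f g
    unfolding M_def C_def A_def B_def by (rule factor[OF mn Iset I'set])
  have e1: "mallows_prob n q (\<lambda>p. pattern p I = \<sigma> \<and> pattern p I' = \<tau>) =
     M (\<lambda>s. if s = \<sigma> then 1 else 0) (\<lambda>s. if s = \<tau> then 1 else 0) / Z n q"
    using mp[of "\<lambda>s. s = \<sigma>" "\<lambda>s. s = \<tau>"] by simp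
  have e2: "mallows_prob n q (\<lambda>p. pattern p I = \<sigma>) =
     M (\<lambda>s. if s = \<sigma> then 1 else 0) (\<lambda>_. 1) / Z n q"
    using mp[of "\<lambda>s. s = \<sigma>" "\<lambda>s. True"] by simp
  have e3: "mallows_prob n q (\<lambda>p. pattern p I' = \<tau>) =
     M (\<lambda>_. 1) (\<lambda>s. if s = \<tau> then 1 else 0) / Z n q"
    using mp[of "\<lambda>s. True" "\<lambda>s. s = \<tau>"] by simp
  show "mallows_prob n q (\<lambda>p. pattern p I = \<sigma> \<and> pattern p I' = \<tau>)
      = mallows_prob n q (\<lambda>p. pattern p I = \<sigma>) * mallows_prob n q (\<lambda>p. pattern p I' = \<tau>)"
    unfolding e1 e2 e3 Zm Mf by (cases "C * A (\<lambda>_. 1) * B (\<lambda>_. 1) = 0") (auto simp: field_simps)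
qed

end
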